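(* Let $G=(V,E)$, the token alphabet, the test distribution $\mathcal{D}_{\mathrm{test}}$, the program $P_{\mathrm{prog}}$, its greedy generation $\mathrm{prog}(\cdot)$ and the decoding map $\mathrm{dec}$ be as in the context. For every $k\ge1$ and every input–label pair $(\widetilde{\mathtt{inp}}^k,\widetilde{\mathtt{lab}}^k)$ in the support of $\mathcal{D}_{\mathrm{test}}$, $\mathrm{dec}(\mathrm{prog}(\widetilde{\mathtt{inp}}^k))=\mathrm{dec}(\widetilde{\mathtt{lab}}^k)$. Consequently $\mathrm{prog}(\cdot)$ minimizes the few-shot testing losses $L^k_{\mathrm{test}}:=-\Pr_{\mathcal{D}_{\mathrm{test}}}\big[\mathrm{dec}(\mathrm{prog}(\widetilde{\mathtt{inp}}^k))=\mathrm{dec}(\widetilde{\mathtt{lab}}^k)\big]$, $k=1,\dots,K-1$.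
   Context: Causal structure. Let $\mathcal{V}_{\mathrm{all}}$ be a finite alphabet of vertex symbols and $G=(V,E)$ a directed graph with $V\subseteq\mathcal{V}_{\mathrm{all}}$. Every $v\in\mathcal{V}_{\mathrm{all}}$ has a finite value set $\mathtt{VALS}(v)\subset\mathbb{Z}$ and a finite nonempty set $\mathtt{CONT}(v)$ of context tokens; these sets are pairwise disjoint and disjoint from vertex and value symbols. Each edge $e=(v_1,v_2)\in E$ carries an operation $\mathtt{op}(e)$ of the form $q\mapsto q+c_e$ ($c_e\in\mathbb{Z}$) mapping $\mathtt{VALS}(v_1)$ into $\mathtt{VALS}(v_2)$. Chains are $\mathcal{T}(G)=\{[v_1,\dots,v_n]:(v_i,v_{i+1})\in E\}$; the depth $N$ is the maximal chain length. Special tokens: $o^{\mathrm{eq}}$ ("="), $o^{\mathrm{cm}}$ (","), $o^{\mathrm{qu}}$ ("?"), $o^{\mathrm{dlm}}$ (newline). Test sequences: a chain $[v_1,\dots,v_N]\in\mathcal{T}(G)$ of length $N$ with $q_1\sim\mathrm{Uniform}(\mathtt{VALS}(v_1))$ and $q_i=\mathtt{op}(v_{i-1},v_i)(q_{i-1})$, giving $[v_1,q_1,\dots,v_N,q_N]$. Processing: $[v_1,q_1,\dots,v_L,q_L]$ becomes $[v_L,o^{\mathrm{eq}},o^{\mathrm{qu}},c(v_1)_1,\dots,c(v_1)_{l_1},v_1,o^{\mathrm{eq}},q_1,o^{\mathrm{cm}},\dots,o^{\mathrm{cm}},c(v_L)_1,\dots,c(v_L)_{l_L},v_L,o^{\mathrm{eq}},q_L]$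 with independently $l_i\sim\mathrm{Uniform}\{1,\dots,|\mathtt{CONT}(v_i)|\}$ and $c(v_i)_1,\dots,c(v_i)_{l_i}$ drawn from $\mathtt{CONT}(v_i)$ without replacement. For $k\in\{0,\dots,K\}$, take $k+1$ test sequences with the same vertex list and independent values/context tokens; $\widetilde{\mathtt{inp}}^k$ is $\widetilde{\mathtt{seq}}^{(1)},o^{\mathrm{dlm}},\dots,o^{\mathrm{dlm}},\widetilde{\mathtt{seq}}^{(k)},o^{\mathrm{dlm}}$ followed by the prefix $[v_N,o^{\mathrm{eq}},o^{\mathrm{qu}},c(v_1)^{(k+1)}_{1..l_1},v_1,o^{\mathrm{eq}},q^{(k+1)}_1,o^{\mathrm{cm}}]$ of the processed $(k+1)$-th sequence; $\widetilde{\mathtt{lab}}^k$ is the remainder of that processed sequence. This defines $\mathcal{D}_{\mathrm{test}}$. The map $\mathrm{dec}$ extracts from a processed token string the list of vertex–value pairs $[v_2,q_2,\dots,v_N,q_N]$ (the vertex and value in each occurrence of "vertex, $o^{\mathrm{eq}}$, value"). Program $P_{\mathrm{prog}}(\cdot\mid z_{1:T})$ (for sentences with at least one complete previous shot): (i) if $z_T=o^{\mathrm{cm}}$, then $z_{T-3}$ is a vertex $v_i$; find $v_i$ in previous shots and the vertex $v_{i+1}$ following it; output $\mathrm{Uniform}(\mathtt{CONT}(v_{i+1}))$. (ii) if $z_{T-k+1:T}=[c(v_j)_1,\dots,c(v_j)_k]$ is a run of context tokens of $v_j$, output $\mathrm{Uniform}(\mathtt{CONT}(v_j)\cup\{v_j\}\setminus\{c(v_j)_1,\dots,c(v_j)_k\})$.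 (iii) if $z_T$ is a vertex, output $o^{\mathrm{eq}}$ with probability 1. (iv) if $z_T=o^{\mathrm{eq}}$, $z_{T-1}=v_j$: if $v_j\notin V$ or $v_j$ is the first vertex of $V$ in the current sequence, output $\mathrm{Uniform}(\mathtt{VALS}(v_j))$; otherwise, with $v_{j_1}$ (value $q_{j_1}$) the nearest preceding vertex of $V$ in the current sequence, output $\mathtt{op}(v_{j_1},v_j)(q_{j_1})$ with probability 1. (v) if $z_T$ is a value, output $o^{\mathrm{cm}}$ with probability 1. The generation $\mathrm{prog}(\widetilde{\mathtt{inp}}^k)$ is greedy decoding: repeatedly append a token of maximal probability under $P_{\mathrm{prog}}$ (ties broken arbitrarily), until the value of the goal vertex (the vertex named at the start of the current sequence) has been produced. *)

theory Defs
  imports "HOL-Probability.Probability"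
begin

datatype ('v, 'c) tok = Vtx 'v | Val int | Ctx 'c | Eq | Cm | Qu | Dlm

record ('v, 'c) cstruct =
  Vall :: "'v set"
  Vs   :: "'v set"
  Es   :: "('v \<times> 'v) set"
  VALS :: "'v \<Rightarrow> int set"
  CONT :: "'v \<Rightarrow> 'c set"
  cst  :: "'v \<times> 'v \<Rightarrow> int"  (* op(e) = (\<lambda>q. q + cst e) *)

definition wf_struct :: "('v, 'c) cstruct \<Rightarrow> bool" where
  "wf_struct S \<longleftrightarrow>
     finite (Vall S) \<and> Vs S \<subseteq> Vall S \<and> Es S \<subseteq> Vs S \<times> Vs S \<and>
     (\<forall>v \<in> Vall S. finite (VALS S v) \<and> finite (CONT S v) \<and> CONT S v \<noteq> {}) \<and>
     (\<forall>v \<in> Vall S. \<forall>w \<in> Vall S. v \<noteq> w \<longrightarrow> CONT S v \<inter> CONT S w = {}) \<and>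
     (\<forall>(a, b) \<in> Es S. \<forall>q \<in> VALS S a. q + cst S (a, b) \<in> VALS S b)"

definition is_chain :: "('v, 'c) cstruct \<Rightarrow> 'v list \<Rightarrow> bool" where
  "is_chain S vs \<longleftrightarrow> vs \<noteq> [] \<and> set vs \<subseteq> Vs S \<and>
     (\<forall>i. Suc i < length vs \<longrightarrow> (vs ! i, vs ! Suc i) \<in> Es S)"

definition chains :: "('v, 'c) cstruct \<Rightarrow> 'v list set" where
  "chains S = {vs. is_chain S vs}"

definition depth :: "('v, 'c) cstruct \<Rightarrow> nat" where
  "depth S = Max (length ` chains S)"

definition unif :: "'a set \<Rightarrow> 'a \<Rightarrow> real" where
  "unif A t = (if finite A \<and> t \<in> A then 1 / real (card A) else 0)"

definition cur_seq :: "('v, 'c) tok list \<Rightarrow> ('v, 'c) tok list" where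
  "cur_seq z = rev (takeWhile (\<lambda>t. t \<noteq> Dlm) (rev z))"

definition prev_shots :: "('v, 'c) tok list \<Rightarrow> ('v, 'c) tok list" where
  "prev_shots z = take (length z - length (cur_seq z)) z"

definition is_vtx :: "('v, 'c) tok \<Rightarrow> bool" where
  "is_vtx t \<longleftrightarrow> (\<exists>v. t = Vtx v)"

definition next_vtx :: "'v \<Rightarrow> ('v, 'c) tok list \<Rightarrow> ('v, 'c) tok option" where
  "next_vtx v xs = (case dropWhile (\<lambda>t. t \<noteq> Vtx v) xs of
                      [] \<Rightarrow> None
                    | _ # rest \<Rightarrow> find is_vtx rest)"

definition P_prog :: "('v, 'c) cstruct \<Rightarrow> ('v, 'c) tok list \<Rightarrow> ('v, 'c) tok \<Rightarrow> real" where
  "P_prog S z t =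
    (if z = [] then 0 else
     (case last z of
        Cm \<Rightarrow>
          (if 4 \<le> length z then
             (case z ! (length z - 4) of
                Vtx vi \<Rightarrow>
                  (case next_vtx vi (prev_shots z) of
                     Some (Vtx w) \<Rightarrow> unif (Ctx ` CONT S w) t
                   | _ \<Rightarrow> 0)
              | _ \<Rightarrow> 0)
           else 0)
      | Ctx x \<Rightarrow>
          (if \<exists>v \<in> Vall S. x \<in> CONT S v then
             (let v = (SOME v. v \<in> Vall S \<and> x \<in> CONT S v);
                  run = takeWhile (\<lambda>t. \<exists>y. t = Ctx y \<and> y \<in> CONT S v) (rev z)
              in unif ((Ctx ` CONT S v \<union> {Vtx v}) - set run) t)
           else 0)
      | Vtx _ \<Rightarrow> (if t = Eq then 1 else 0)
      | Eq \<Rightarrow>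
          (if 2 \<le> length z then
             (case z ! (length z - 2) of
                Vtx vj \<Rightarrow>
                  (let cs = cur_seq z;
                       before = take (length cs - 2) cs;
                       idxs = {i. i < length before \<and> (\<exists>u \<in> Vs S. before ! i = Vtx u)}
                   in if vj \<notin> Vs S \<or> idxs = {} then unif (Val ` VALS S vj) t
                      else
                        (let p = Max idxs
                         in case before ! p of
                              Vtx u \<Rightarrow>
                                (if p + 2 < length before \<and> (u, vj) \<in> Es S then
                                   (case before ! (p + 2) of
                                      Val q \<Rightarrow> (if t = Val (q + cst S (u, vj)) then 1 else 0)
                                    | _ \<Rightarrow> 0)
                                 else 0)
                            | _ \<Rightarrow> 0))
              | _ \<Rightarrow> 0)
           else 0)
      | Val _ \<Rightarrow> (if t = Cm then 1 else 0)
      | _ \<Rightarrow> 0))"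

definition greedy_step :: "('v, 'c) cstruct \<Rightarrow> ('v, 'c) tok list \<Rightarrow> ('v, 'c) tok \<Rightarrow> bool" where
  "greedy_step S z t \<longleftrightarrow> 0 < P_prog S z t \<and> (\<forall>t'. P_prog S z t' \<le> P_prog S z t)"

(* the value of the goal vertex (named at the start of the current sequence)
   has just been produced *)
definition goal_done :: "('v, 'c) tok list \<Rightarrow> bool" where
  "goal_done z \<longleftrightarrow>
     (case cur_seq z of
        Vtx g # _ \<Rightarrow> (\<exists>pre q. z = pre @ [Vtx g, Eq, Val q])
      | _ \<Rightarrow> False)"

inductive gen :: "('v, 'c) cstruct \<Rightarrow> ('v, 'c) tok list \<Rightarrow> ('v, 'c) tok list \<Rightarrow> bool"
  for S where
  stop: "goal_done z \<Longrightarrow> gen S z []"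
| step: "\<not> goal_done z \<Longrightarrow> greedy_step S z t \<Longrightarrow> gen S (z @ [t]) out \<Longrightarrow> gen S z (t # out)"

definition infinite_run :: "('v, 'c) cstruct \<Rightarrow> ('v, 'c) tok list \<Rightarrow> bool" where
  "infinite_run S z \<longleftrightarrow>
     (\<exists>f :: nat \<Rightarrow> ('v, 'c) tok. \<forall>n.
        \<not> goal_done (z @ map f [0..<n]) \<and> greedy_step S (z @ map f [0..<n]) (f n))"

fun dec :: "('v, 'c) tok list \<Rightarrow> ('v \<times> int) list" where
  "dec (Vtx v # Eq # Val q # r) = (v, q) # dec r"
| "dec (_ # r) = dec r"
| "dec [] = []"

fun chain_vals :: "('v, 'c) cstruct \<Rightarrow> 'v list \<Rightarrow> int \<Rightarrow> int list" where
  "chain_vals S [] q = []"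
| "chain_vals S [v] q = [q]"
| "chain_vals S (u # w # r) q = q # chain_vals S (w # r) (q + cst S (u, w))"

fun join_cm :: "('v, 'c) tok list list \<Rightarrow> ('v, 'c) tok list" where
  "join_cm [] = []"
| "join_cm [b] = b"
| "join_cm (b # bs) = b @ [Cm] @ join_cm bs"

definition block :: "'v \<Rightarrow> int \<Rightarrow> 'c list \<Rightarrow> ('v, 'c) tok list" where
  "block v q cs = map Ctx cs @ [Vtx v, Eq, Val q]"

definition processed :: "('v, 'c) cstruct \<Rightarrow> 'v list \<Rightarrow> int \<Rightarrow> 'c list list \<Rightarrow> ('v, 'c) tok list" where
  "processed S vs q css =
     [Vtx (last vs), Eq, Qu] @
     join_cm
       (map (\<lambda>((v, qv), cs). block v qv cs) (zip (zip vs (chain_vals S vs q)) css))"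

definition valid_shot :: "('v, 'c) cstruct \<Rightarrow> 'v list \<Rightarrow> int \<times> 'c list list \<Rightarrow> bool" where
  "valid_shot S vs sh \<longleftrightarrow>
     fst sh \<in> VALS S (hd vs) \<and> length (snd sh) = length vs \<and>
     (\<forall>i < length vs. distinct (snd sh ! i) \<and> set (snd sh ! i) \<subseteq> CONT S (vs ! i) \<and>
        1 \<le> length (snd sh ! i) \<and> length (snd sh ! i) \<le> card (CONT S (vs ! i)))"

definition test_support :: "('v, 'c) cstruct \<Rightarrow> nat \<Rightarrow> nat \<Rightarrow>
    ('v, 'c) tok list \<Rightarrow> ('v, 'c) tok list \<Rightarrow> bool" where
  "test_support S K k inp lab \<longleftrightarrow> k \<le> K \<and>
     (\<exists>vs shots. is_chain S vs \<and> length vs = depth S \<and> length shots = Suc k \<and>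
        (\<forall>sh \<in> set shots. valid_shot S vs sh) \<and>
        (let lp = processed S vs (fst (last shots)) (snd (last shots));
             n = 3 + length (hd (snd (last shots))) + 4
         in inp = concat (map (\<lambda>sh. processed S vs (fst sh) (snd sh) @ [Dlm]) (butlast shots))
                  @ take n lp
          \<and> lab = drop n lp))"

end

theory Submission
  imports Defs
begin



lemma dec_Cm_append: "dec (xs @ Cm # ys) = dec xs @ dec ys"
proof (induction xs rule: dec.induct)
  case (1 v q r) then show ?case by simp
next
  case ("2_1" r) then show ?case by simp
next
  case ("2_2" r) then show ?case by simp
next
  case ("2_3" r) then show ?case by simp
next
  case ("2_4" r) then show ?case by simp
next
  case ("2_5" r) then show ?case by simp
next
  case ("2_6" r) then show ?case by simp
qed (auto split: list.splits tok.splits)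

lemma dec_Ctx_append: "dec (map Ctx cs @ r) = dec r"
  by (induction cs) auto

lemma join_cm_Cons: "join_cm (b # bs) = b @ concat (map ((#) Cm) bs)"
  by (induction bs arbitrary: b) auto

lemma join_cm_split: "a \<le> m \<Longrightarrow> m < b \<Longrightarrow>
  join_cm (map f [a..<b]) = concat (map (\<lambda>j. f j @ [Cm]) [a..<m]) @ join_cm (map f [m..<b])"
proof (induction m arbitrary: a)
  case 0 then show ?case by simp
next
  case (Suc m)
  show ?case
  proof (cases "a = Suc m")
    case True then show ?thesis by simp
  next
    case False
    then have "a \<le> m" using Suc by simp
    from Suc.IH[OF this] Suc.prems have "join_cm (map f [a..<b]) = concat (map (\<lambda>j. f j @ [Cm]) [a..<m]) @ join_cm (map f [m..<b])" by simp
    also have "[m..<b] = m # [Suc m..<b]" using Suc.prems by (simp add: upt_conv_Cons)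
    also have "[Suc m..<b] = Suc m # [Suc (Suc m)..<b]" using Suc.prems by (simp add: upt_conv_Cons)
    finally show ?thesis using Suc.prems \<open>a \<le> m\<close> by (simp add: upt_conv_Cons join_cm_Cons)
  qed
qed

lemma chain_vals_length: "length (chain_vals S vs q) = length vs"
  by (induction S vs q rule: chain_vals.induct) auto

lemma chain_vals_0: "vs \<noteq> [] \<Longrightarrow> chain_vals S vs q ! 0 = q"
  by (induction S vs q rule: chain_vals.induct) auto

lemma chain_vals_Suc: "Suc j < length vs \<Longrightarrow>
  chain_vals S vs q ! Suc j = chain_vals S vs q ! j + cst S (vs ! j, vs ! Suc j)"
proof (induction S vs q arbitrary: j rule: chain_vals.induct)
  case (3 S u w r q)
  show ?case
  proof (cases j)
    case 0 then show ?thesis by (simp add: chain_vals_0)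
  next
    case (Suc j') then show ?thesis using 3 by simp
  qed
qed auto

lemma find_Ctx_append: "find is_vtx (map Ctx cs @ r) = find is_vtx r"
  by (induction cs) (auto simp: is_vtx_def)

lemma dropWhile_skip: "Vtx v \<notin> set A \<Longrightarrow> dropWhile (\<lambda>t. t \<noteq> Vtx v) (A @ Vtx v # B) = Vtx v # B"
  by (induction A) auto

lemma next_vtx_split: "Vtx v \<notin> set A \<Longrightarrow> next_vtx v (A @ Vtx v # B) = find is_vtx B"
  by (simp add: next_vtx_def dropWhile_skip)

lemma cur_seq_app: "Dlm \<notin> set cs \<Longrightarrow> cur_seq (P' @ Dlm # cs) = cs"
proof -
  assume a: "Dlm \<notin> set cs"
  have "rev (P' @ Dlm # cs) = rev cs @ Dlm # rev P'" by simp
  moreover have "takeWhile (\<lambda>t. t \<noteq> Dlm) (rev cs @ Dlm # rev P') = rev cs"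
    using a by (subst takeWhile_append2) auto
  ultimately show ?thesis by (simp add: cur_seq_def)
qed

lemma prev_shots_app: "Dlm \<notin> set cs \<Longrightarrow> prev_shots (P' @ Dlm # cs) = P' @ [Dlm]"
  by (simp add: prev_shots_def cur_seq_app)




lemma greedy_unif:
  assumes "\<And>t. P_prog S z t = unif A t" "finite A" "A \<noteq> {}"
  shows "greedy_step S z t \<longleftrightarrow> t \<in> A"
proof -
  have c: "card A > 0" using assms(2,3) by (simp add: card_gt_0_iff)
  show ?thesis
    unfolding greedy_step_def assms(1) unif_def using assms(2) c
    by (auto split: if_splits)
qed

lemma greedy_det:
  assumes "\<And>t. P_prog S z t = (if t = a then 1 else 0)"
  shows "greedy_step S z t \<longleftrightarrow> t = a"
  unfolding greedy_step_def assms by auto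

lemma P_prog_Cm:
  "z \<noteq> [] \<Longrightarrow> last z = Cm \<Longrightarrow> 4 \<le> length z \<Longrightarrow> z ! (length z - 4) = Vtx vi \<Longrightarrow>
   next_vtx vi (prev_shots z) = Some (Vtx w) \<Longrightarrow> P_prog S z t = unif (Ctx ` CONT S w) t"
  by (simp add: P_prog_def)

lemma P_prog_Vtx: "z \<noteq> [] \<Longrightarrow> last z = Vtx v \<Longrightarrow> P_prog S z t = (if t = Eq then 1 else 0)"
  by (simp add: P_prog_def)

lemma P_prog_Val: "z \<noteq> [] \<Longrightarrow> last z = Val q \<Longrightarrow> P_prog S z t = (if t = Cm then 1 else 0)"
  by (simp add: P_prog_def)

lemma P_prog_Ctx:
  assumes "z \<noteq> []" "last z = Ctx x" "v \<in> Vall S" "x \<in> CONT S v"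
    "\<And>w. w \<in> Vall S \<Longrightarrow> x \<in> CONT S w \<Longrightarrow> w = v"
  shows "P_prog S z t = unif ((Ctx ` CONT S v \<union> {Vtx v}) -
            set (takeWhile (\<lambda>t. \<exists>y. t = Ctx y \<and> y \<in> CONT S v) (rev z))) t"
proof -
  have e: "\<exists>v \<in> Vall S. x \<in> CONT S v" using assms by blast
  have s: "(SOME v. v \<in> Vall S \<and> x \<in> CONT S v) = v"
  proof (rule some_equality)
    show "v \<in> Vall S \<and> x \<in> CONT S v" using assms by blast
  next
    fix w assume "w \<in> Vall S \<and> x \<in> CONT S w"
    then show "w = v" using assms(5) by blast
  qed
  show ?thesis using assms(1,2) e by (simp add: P_prog_def s Let_def)
qed

lemma P_prog_Eq:
  assumes "z \<noteq> []" "last z = Eq" "2 \<le> length z" "z ! (length z - 2) = Vtx vj" "vj \<in> Vs S"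
    "cur_seq z = B @ [Vtx vj, Eq]" "p + 2 < length B" "B ! p = Vtx u" "u \<in> Vs S"
    "\<And>j. p < j \<Longrightarrow> j < length B \<Longrightarrow> \<not> is_vtx (B ! j)"
    "(u, vj) \<in> Es S" "B ! (p + 2) = Val q"
  shows "P_prog S z t = (if t = Val (q + cst S (u, vj)) then 1 else 0)"
proof -
  define idxs where "idxs = {i. i < length B \<and> (\<exists>u \<in> Vs S. B ! i = Vtx u)}"
  have pin: "p \<in> idxs" using assms(7,8,9) by (auto simp: idxs_def)
  have fin: "finite idxs" by (auto simp: idxs_def)
  have mx: "Max idxs = p"
  proof (rule Max_eqI[OF fin _ pin])
    fix y assume "y \<in> idxs"
    then show "y \<le> p" using assms(10)[of y] by (force simp: idxs_def is_vtx_def)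
  qed
  have ne: "idxs \<noteq> {}" using pin by auto
  have h1: "p < length B" using assms(7) by simp
  have h2: "(B @ [Vtx vj, Eq]) ! p = Vtx u" using h1 assms(8) by (simp add: nth_append)
  have tk: "take (length (B @ [Vtx vj, Eq]) - 2) (B @ [Vtx vj, Eq]) = B" by simp
  show ?thesis using assms(1-5,7,8,11,12) ne mx
    unfolding P_prog_def
    apply (simp add: Let_def assms(6) idxs_def[symmetric])
    using assms(9) h1 h2 by blast
qed




lemma last3_eq: "xs @ [a, b, c] = ys @ [d, e, f] \<Longrightarrow> a = d \<and> b = e \<and> c = f"
  by (drule arg_cong[where f = rev]) simp

locale gsetup =
  fixes S :: "('v, 'c) cstruct" and vs :: "'v list" and vals :: "int list" and P' :: "('v, 'c) tok list"
  assumes wf: "wf_struct S"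
    and len: "2 \<le> length vs"
    and dist: "distinct vs"
    and chain: "is_chain S vs"
    and vlen: "length vals = length vs"
    and vstep: "\<And>j. Suc j < length vs \<Longrightarrow> vals ! Suc j = vals ! j + cst S (vs ! j, vs ! Suc j)"
    and nxt: "\<And>i. 1 \<le> i \<Longrightarrow> i < length vs \<Longrightarrow> next_vtx (vs ! (i - 1)) (P' @ [Dlm]) = Some (Vtx (vs ! i))"
begin

definition inv_at :: "nat \<Rightarrow> ('v, 'c) tok list \<Rightarrow> 'c list \<Rightarrow> nat \<Rightarrow> ('v, 'c) tok list \<Rightarrow> bool" where
  "inv_at i H' ws ph cs \<longleftrightarrow> 1 \<le> i \<and> i < length vs \<and> ph \<le> 3 \<and> Dlm \<notin> set H' \<and>
     dec (Vtx (vs ! (length vs - 1)) # H' @ [Vtx (vs ! (i - 1)), Eq, Val (vals ! (i - 1))])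
       = map (\<lambda>j. (vs ! j, vals ! j)) [0..<i] \<and>
     distinct ws \<and> set ws \<subseteq> CONT S (vs ! i) \<and>
     cs = Vtx (vs ! (length vs - 1)) # H' @ [Vtx (vs ! (i - 1)), Eq, Val (vals ! (i - 1)), Cm]
          @ map Ctx ws @ take ph [Vtx (vs ! i), Eq, Val (vals ! i)]"

definition Mx :: nat where "Mx = (\<Sum>v \<in> set vs. card (CONT S v))"

definition inv :: "('v, 'c) tok list \<Rightarrow> nat \<Rightarrow> bool" where
  "inv cs m \<longleftrightarrow> (\<exists>i H' ws ph. inv_at i H' ws ph cs \<and>
      m = (length vs - i) * (Mx + 4) - (length ws + ph))"

lemma vs_Vs: "j < length vs \<Longrightarrow> vs ! j \<in> Vs S"
  using chain by (auto simp: is_chain_def)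

lemma vs_Vall: "j < length vs \<Longrightarrow> vs ! j \<in> Vall S"
  using vs_Vs wf by (auto simp: wf_struct_def)

lemma CONT_fin: "j < length vs \<Longrightarrow> finite (CONT S (vs ! j)) \<and> CONT S (vs ! j) \<noteq> {}"
  using vs_Vall wf by (auto simp: wf_struct_def)

lemma CONT_disj: "j < length vs \<Longrightarrow> x \<in> CONT S (vs ! j) \<Longrightarrow> w \<in> Vall S \<Longrightarrow> x \<in> CONT S w \<Longrightarrow> w = vs ! j"
  using vs_Vall[of j] wf unfolding wf_struct_def by blast

lemma edge: "1 \<le> i \<Longrightarrow> i < length vs \<Longrightarrow> (vs ! (i - 1), vs ! i) \<in> Es S"
  using chain unfolding is_chain_def by (metis Suc_diff_1 less_le_trans zero_less_one)

lemma ws_bound: "i < length vs \<Longrightarrow> distinct ws \<Longrightarrow> set ws \<subseteq> CONT S (vs ! i) \<Longrightarrow> length ws \<le> Mx"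
proof -
  assume a: "i < length vs" "distinct ws" "set ws \<subseteq> CONT S (vs ! i)"
  have "length ws = card (set ws)" using a(2) by (simp add: distinct_card)
  also have "\<dots> \<le> card (CONT S (vs ! i))" using a CONT_fin[of i] by (simp add: card_mono)
  also have "\<dots> \<le> Mx" unfolding Mx_def
    by (rule member_le_sum) (use a(1) in auto)
  finally show ?thesis .
qed

lemma inv_at_noDlm: "inv_at i H' ws ph cs \<Longrightarrow> Dlm \<notin> set cs"
  unfolding inv_at_def by (auto dest: in_set_takeD)

lemma goal_done_iff:
  assumes "inv_at i H' ws ph cs"
  shows "goal_done (P' @ Dlm # cs) \<longleftrightarrow> (ph = 3 \<and> i = length vs - 1)"
proof -
  let ?vN = "vs ! (length vs - 1)"
  let ?X = "Vtx ?vN # H' @ [Vtx (vs ! (i - 1)), Eq, Val (vals ! (i - 1)), Cm] @ map Ctx ws"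
  have A: "1 \<le> i" "i < length vs" "ph \<le> 3" and cs: "cs = ?X @ take ph [Vtx (vs ! i), Eq, Val (vals ! i)]"
    using assms by (auto simp: inv_at_def)
  have cur: "cur_seq (P' @ Dlm # cs) = cs" using cur_seq_app inv_at_noDlm[OF assms] by blast
  have gd: "goal_done (P' @ Dlm # cs) \<longleftrightarrow> (\<exists>pre q. P' @ Dlm # cs = pre @ [Vtx ?vN, Eq, Val q])"
    unfolding goal_done_def cur using cs by simp
  show ?thesis
  proof (cases "ph = 3")
    case True
    then have z: "P' @ Dlm # cs = (P' @ Dlm # ?X) @ [Vtx (vs ! i), Eq, Val (vals ! i)]"
      using cs by (simp add: numeral_eq_Suc)
    have "(\<exists>pre q. P' @ Dlm # cs = pre @ [Vtx ?vN, Eq, Val q]) \<longleftrightarrow> vs ! i = ?vN"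
      unfolding z using last3_eq by fastforce
    also have "\<dots> \<longleftrightarrow> i = length vs - 1"
      using dist A len by (simp add: nth_eq_iff_index_eq)
    finally show ?thesis using gd True by simp
  next
    case False
    have "last (P' @ Dlm # cs) \<noteq> Val q" for q
    proof -
      have "ph = 0 \<or> ph = 1 \<or> ph = 2" using False A by auto
      then show ?thesis using cs by (auto simp: last_map numeral_eq_Suc)
    qed
    then have "\<not> goal_done (P' @ Dlm # cs)" unfolding gd
    proof (clarify)
      fix pre q assume "\<And>q. last (P' @ Dlm # cs) \<noteq> Val q" "P' @ Dlm # cs = pre @ [Vtx ?vN, Eq, Val q]"
      then show False by (metis last_ConsL last_ConsR last_append list.distinct(1))
    qed
    then show ?thesis using False by simp
  qed
qed

end



lemma meas1: "i < (n::nat) \<Longrightarrow> a + 1 \<le> M + 4 \<Longrightarrow> (n - i) * (M + 4) - (a + 1) < (n - i) * (M + 4) - a"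
proof -
  assume "i < n" "a + 1 \<le> M + 4"
  then obtain d where "n - i = Suc d" by (metis Suc_diff_Suc)
  then show ?thesis using \<open>a + 1 \<le> M + 4\<close> by simp
qed

lemma meas2: "Suc i < (n::nat) \<Longrightarrow> a \<le> M + 3 \<Longrightarrow> (n - Suc i) * (M + 4) - 0 < (n - i) * (M + 4) - a"
proof -
  assume a: "Suc i < n" "a \<le> M + 3"
  then have "n - i = Suc (n - Suc i)" by simp
  then show ?thesis using a(2) by simp
qed

context gsetup begin

lemma inv_done:
  assumes "inv_at i H' ws ph cs" "goal_done (P' @ Dlm # cs)"
  shows "dec cs = map (\<lambda>j. (vs ! j, vals ! j)) [0..<length vs]"
proof -
  have p: "ph = 3" "i = length vs - 1" using goal_done_iff[OF assms(1)] assms(2) by auto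
  have A: "dec (Vtx (vs ! (length vs - 1)) # H' @ [Vtx (vs ! (i - 1)), Eq, Val (vals ! (i - 1))])
       = map (\<lambda>j. (vs ! j, vals ! j)) [0..<i]"
   and cs: "cs = Vtx (vs ! (length vs - 1)) # H' @ [Vtx (vs ! (i - 1)), Eq, Val (vals ! (i - 1)), Cm]
          @ map Ctx ws @ take ph [Vtx (vs ! i), Eq, Val (vals ! i)]"
    using assms(1) by (auto simp: inv_at_def)
  have "cs = (Vtx (vs ! (length vs - 1)) # H' @ [Vtx (vs ! (i - 1)), Eq, Val (vals ! (i - 1))])
          @ Cm # (map Ctx ws @ [Vtx (vs ! i), Eq, Val (vals ! i)])"
    using cs p(1) by (simp add: numeral_eq_Suc)
  then have "dec cs = map (\<lambda>j. (vs ! j, vals ! j)) [0..<i] @ [(vs ! i, vals ! i)]"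
    using A by (simp only: dec_Cm_append dec_Ctx_append) simp
  also have "\<dots> = map (\<lambda>j. (vs ! j, vals ! j)) [0..<length vs]"
  proof -
    have "length vs = Suc i" using p(2) len by simp
    then show ?thesis by simp
  qed
  finally show ?thesis .
qed

end



context gsetup begin

abbreviation "meas i ws ph \<equiv> (length vs - i) * (Mx + 4) - (length ws + ph)"

definition good_next where
  "good_next i ws ph cs t \<longleftrightarrow> (\<exists>i2 H2 ws2 ph2. inv_at i2 H2 ws2 ph2 (cs @ [t]) \<and> meas i2 ws2 ph2 < meas i ws ph)"

lemma step_ph0_nil:
  assumes "inv_at i H' [] 0 cs"
  shows "(\<exists>t. greedy_step S (P' @ Dlm # cs) t) \<and> (\<forall>t. greedy_step S (P' @ Dlm # cs) t \<longrightarrow> good_next i [] 0 cs t)"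
proof -
  let ?vN = "vs ! (length vs - 1)" and ?u = "vs ! (i - 1)" and ?v = "vs ! i"
  have A: "1 \<le> i" "i < length vs" and cs: "cs = Vtx ?vN # H' @ [Vtx ?u, Eq, Val (vals ! (i - 1)), Cm]"
    using assms by (auto simp: inv_at_def)
  define z where "z = P' @ Dlm # cs"
  have z4: "z = (P' @ Dlm # Vtx ?vN # H') @ [Vtx ?u, Eq, Val (vals ! (i - 1)), Cm]"
    using cs z_def by simp
  have ps: "prev_shots z = P' @ [Dlm]" using z_def prev_shots_app inv_at_noDlm[OF assms] by blast
  have P: "P_prog S z t = unif (Ctx ` CONT S ?v) t" for t
  proof (rule P_prog_Cm)
    show "z \<noteq> []" "last z = Cm" "4 \<le> length z" using z4 by auto
    show "z ! (length z - 4) = Vtx ?u" unfolding z4 by (simp add: nth_append)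
    show "next_vtx ?u (prev_shots z) = Some (Vtx ?v)" using ps nxt A by simp
  qed
  have g: "greedy_step S z t \<longleftrightarrow> t \<in> Ctx ` CONT S ?v" for t
    by (rule greedy_unif[OF P]) (use CONT_fin[OF A(2)] in auto)
  show ?thesis unfolding z_def[symmetric]
  proof (intro conjI allI impI)
    obtain c where "c \<in> CONT S ?v" using CONT_fin[OF A(2)] by blast
    then show "\<exists>t. greedy_step S z t" using g by blast
  next
    fix t assume "greedy_step S z t"
    then obtain c where c: "c \<in> CONT S ?v" "t = Ctx c" using g by blast
    have "inv_at i H' [c] 0 (cs @ [t])" using assms c cs by (simp add: inv_at_def)
    moreover have "meas i [c] 0 < meas i [] 0" using meas1[OF A(2), of 0 Mx] by simp
    ultimately show "good_next i [] 0 cs t" unfolding good_next_def by blast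
  qed
qed

lemma step_ph0_cons:
  assumes "inv_at i H' ws 0 cs" "ws \<noteq> []"
  shows "(\<exists>t. greedy_step S (P' @ Dlm # cs) t) \<and> (\<forall>t. greedy_step S (P' @ Dlm # cs) t \<longrightarrow> good_next i ws 0 cs t)"
proof -
  let ?vN = "vs ! (length vs - 1)" and ?u = "vs ! (i - 1)" and ?v = "vs ! i"
  have A: "1 \<le> i" "i < length vs" and cs: "cs = Vtx ?vN # H' @ [Vtx ?u, Eq, Val (vals ! (i - 1)), Cm] @ map Ctx ws"
    and ws: "distinct ws" "set ws \<subseteq> CONT S ?v"
    using assms by (auto simp: inv_at_def)
  define z where "z = P' @ Dlm # cs"
  define pr where "pr = (\<lambda>t::('v, 'c) tok. \<exists>y. t = Ctx y \<and> y \<in> CONT S ?v)"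
  have lw: "last ws \<in> CONT S ?v" using ws assms(2) by auto
  have lz: "last z = Ctx (last ws)" using z_def cs assms(2) by (simp add: last_map)
  have rz: "rev z = rev (map Ctx ws) @ Cm # rev (P' @ Dlm # Vtx ?vN # H' @ [Vtx ?u, Eq, Val (vals ! (i - 1))])"
    using z_def cs by simp
  have tw: "takeWhile pr (rev z) = rev (map Ctx ws)"
    unfolding rz using ws(2) by (subst takeWhile_append2) (auto simp: pr_def)
  have P: "P_prog S z t = unif ((Ctx ` CONT S ?v \<union> {Vtx ?v}) - Ctx ` set ws) t" for t
    using P_prog_Ctx[of z "last ws" ?v S t, OF _ lz vs_Vall[OF A(2)] lw CONT_disj[OF A(2) lw]] tw
    unfolding pr_def by (simp add: z_def)
  have g: "greedy_step S z t \<longleftrightarrow> t \<in> (Ctx ` CONT S ?v \<union> {Vtx ?v}) - Ctx ` set ws" for t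
    by (rule greedy_unif[OF P]) (use CONT_fin[OF A(2)] in auto)
  have bound: "length ws \<le> Mx" using ws_bound[OF A(2) ws] .
  show ?thesis unfolding z_def[symmetric]
  proof (intro conjI allI impI)
    show "\<exists>t. greedy_step S z t" using g by blast
  next
    fix t assume "greedy_step S z t"
    then have t: "t = Vtx ?v \<or> (\<exists>c. c \<in> CONT S ?v \<and> c \<notin> set ws \<and> t = Ctx c)" using g by auto
    then show "good_next i ws 0 cs t"
    proof
      assume tv: "t = Vtx ?v"
      have "inv_at i H' ws 1 (cs @ [t])" using assms tv cs by (simp add: inv_at_def)
      moreover have "meas i ws 1 < meas i ws 0" using meas1[OF A(2), of "length ws" Mx] bound by simp
      ultimately show ?thesis unfolding good_next_def by blast
    next
      assume "\<exists>c. c \<in> CONT S ?v \<and> c \<notin> set ws \<and> t = Ctx c"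
      then obtain c where c: "c \<in> CONT S ?v" "c \<notin> set ws" "t = Ctx c" by blast
      have iv: "inv_at i H' (ws @ [c]) 0 (cs @ [t])" using assms c cs by (simp add: inv_at_def)
      have "length (ws @ [c]) \<le> Mx" using ws_bound[OF A(2), of "ws @ [c]"] ws c by simp
      then have "meas i (ws @ [c]) 0 < meas i ws 0" using meas1[OF A(2), of "length ws" Mx] by simp
      with iv show ?thesis unfolding good_next_def by blast
    qed
  qed
qed

end



context gsetup begin

lemma step_ph1:
  assumes "inv_at i H' ws 1 cs"
  shows "(\<exists>t. greedy_step S (P' @ Dlm # cs) t) \<and> (\<forall>t. greedy_step S (P' @ Dlm # cs) t \<longrightarrow> good_next i ws 1 cs t)"
proof -
  have A: "1 \<le> i" "i < length vs" and ws: "distinct ws" "set ws \<subseteq> CONT S (vs ! i)"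
    and cs: "cs = (Vtx (vs ! (length vs - 1)) # H' @ [Vtx (vs ! (i - 1)), Eq, Val (vals ! (i - 1)), Cm] @ map Ctx ws) @ [Vtx (vs ! i)]"
    using assms by (auto simp: inv_at_def)
  have P: "P_prog S (P' @ Dlm # cs) t = (if t = Eq then 1 else 0)" for t
    by (rule P_prog_Vtx[of _ "vs ! i"]) (use cs in auto)
  have g: "greedy_step S (P' @ Dlm # cs) t \<longleftrightarrow> t = Eq" for t by (rule greedy_det[OF P])
  have bound: "length ws \<le> Mx" using ws_bound[OF A(2) ws] .
  have "inv_at i H' ws 2 (cs @ [Eq])" using assms by (simp add: inv_at_def numeral_eq_Suc)
  moreover have "meas i ws 2 < meas i ws 1" using meas1[OF A(2), of "length ws + 1" Mx] bound by simp
  ultimately show ?thesis unfolding good_next_def g by blast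
qed

lemma step_ph2:
  assumes "inv_at i H' ws 2 cs"
  shows "(\<exists>t. greedy_step S (P' @ Dlm # cs) t) \<and> (\<forall>t. greedy_step S (P' @ Dlm # cs) t \<longrightarrow> good_next i ws 2 cs t)"
proof -
  let ?vN = "vs ! (length vs - 1)" and ?u = "vs ! (i - 1)" and ?v = "vs ! i"
  define B where "B = Vtx ?vN # H' @ [Vtx ?u, Eq, Val (vals ! (i - 1)), Cm] @ map Ctx ws"
  have A: "1 \<le> i" "i < length vs" and ws: "distinct ws" "set ws \<subseteq> CONT S ?v"
    and cs: "cs = B @ [Vtx ?v, Eq]"
    using assms by (auto simp: inv_at_def B_def numeral_eq_Suc)
  define z where "z = P' @ Dlm # cs"
  have cur: "cur_seq z = cs" using z_def cur_seq_app inv_at_noDlm[OF assms] by blast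
  have B2: "B = (Vtx ?vN # H' @ [Vtx ?u]) @ (Eq # Val (vals ! (i - 1)) # Cm # map Ctx ws)"
    unfolding B_def by simp
  have nv: "\<not> is_vtx (B ! j)" if "Suc (length H') < j" "j < length B" for j
  proof -
    define L :: "('v, 'c) tok list" where "L = Eq # Val (vals ! (i - 1)) # Cm # map Ctx ws"
    define F where "F = Vtx ?vN # H' @ [Vtx ?u]"
    have BF: "B = F @ L" using B2 F_def L_def by simp
    have lF: "length F = Suc (Suc (length H'))" using F_def by simp
    have "B ! j = L ! (j - length F)" unfolding BF using that lF by (simp add: nth_append_right)
    moreover have "j - length F < length L" using that BF lF by simp
    ultimately have "B ! j \<in> set L" by (metis nth_mem)
    then show ?thesis by (auto simp: is_vtx_def L_def)
  qed
  have P: "P_prog S z t = (if t = Val (vals ! (i - 1) + cst S (?u, ?v)) then 1 else 0)" for t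
  proof (rule P_prog_Eq[where B = B and p = "Suc (length H')"])
    show "z \<noteq> []" "last z = Eq" "2 \<le> length z" using z_def cs by auto
    show "z ! (length z - 2) = Vtx ?v" unfolding z_def cs by (simp add: nth_append)
    show "?v \<in> Vs S" "?u \<in> Vs S" using vs_Vs A by auto
    show "cur_seq z = B @ [Vtx ?v, Eq]" using cur cs by simp
    show "Suc (length H') + 2 < length B" "B ! Suc (length H') = Vtx ?u"
      "B ! (Suc (length H') + 2) = Val (vals ! (i - 1))" unfolding B_def by (simp_all add: nth_append)
    show "(?u, ?v) \<in> Es S" using edge A by blast
    show "\<And>j. Suc (length H') < j \<Longrightarrow> j < length B \<Longrightarrow> \<not> is_vtx (B ! j)" using nv by blast
  qed
  have vi: "vals ! (i - 1) + cst S (?u, ?v) = vals ! i" using vstep[of "i - 1"] A by simp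
  have g: "greedy_step S z t \<longleftrightarrow> t = Val (vals ! i)" for t using greedy_det[OF P] vi by simp
  have bound: "length ws \<le> Mx" using ws_bound[OF A(2) ws] .
  have "inv_at i H' ws 3 (cs @ [Val (vals ! i)])" using assms by (simp add: inv_at_def numeral_eq_Suc)
  moreover have "meas i ws 3 < meas i ws 2" using meas1[OF A(2), of "length ws + 2" Mx] bound by simp
  ultimately show ?thesis unfolding good_next_def z_def[symmetric] g by blast
qed

lemma step_ph3:
  assumes "inv_at i H' ws 3 cs" "\<not> goal_done (P' @ Dlm # cs)"
  shows "(\<exists>t. greedy_step S (P' @ Dlm # cs) t) \<and> (\<forall>t. greedy_step S (P' @ Dlm # cs) t \<longrightarrow> good_next i ws 3 cs t)"
proof -
  let ?vN = "vs ! (length vs - 1)" and ?u = "vs ! (i - 1)" and ?v = "vs ! i"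
  have A: "1 \<le> i" "i < length vs" and ws: "distinct ws" "set ws \<subseteq> CONT S ?v"
    and cs: "cs = Vtx ?vN # H' @ [Vtx ?u, Eq, Val (vals ! (i - 1)), Cm] @ map Ctx ws @ [Vtx ?v, Eq, Val (vals ! i)]"
    and D: "dec (Vtx ?vN # H' @ [Vtx ?u, Eq, Val (vals ! (i - 1))]) = map (\<lambda>j. (vs ! j, vals ! j)) [0..<i]"
    and nd: "Dlm \<notin> set H'"
    using assms(1) by (auto simp: inv_at_def numeral_eq_Suc)
  have Si: "Suc i < length vs" using goal_done_iff[OF assms(1)] assms(2) A by auto
  have P: "P_prog S (P' @ Dlm # cs) t = (if t = Cm then 1 else 0)" for t
    by (rule P_prog_Val[of _ "vals ! i"]) (use cs in auto)
  have g: "greedy_step S (P' @ Dlm # cs) t \<longleftrightarrow> t = Cm" for t by (rule greedy_det[OF P])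
  have bound: "length ws \<le> Mx" using ws_bound[OF A(2) ws] .
  define H2 where "H2 = H' @ [Vtx ?u, Eq, Val (vals ! (i - 1)), Cm] @ map Ctx ws"
  have "dec (Vtx ?vN # H2 @ [Vtx ?v, Eq, Val (vals ! i)])
      = dec ((Vtx ?vN # H' @ [Vtx ?u, Eq, Val (vals ! (i - 1))]) @ Cm # (map Ctx ws @ [Vtx ?v, Eq, Val (vals ! i)]))"
    unfolding H2_def by simp
  also have "\<dots> = map (\<lambda>j. (vs ! j, vals ! j)) [0..<Suc i]"
    by (simp only: dec_Cm_append dec_Ctx_append D) simp
  finally have D2: "dec (Vtx ?vN # H2 @ [Vtx (vs ! (Suc i - 1)), Eq, Val (vals ! (Suc i - 1))])
      = map (\<lambda>j. (vs ! j, vals ! j)) [0..<Suc i]" by simp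
  have "inv_at (Suc i) H2 [] 0 (cs @ [Cm])"
    unfolding inv_at_def using Si D2 nd cs by (auto simp add: H2_def)
  moreover have "meas (Suc i) [] 0 < meas i ws 3" using meas2[OF Si, of "length ws + 3" Mx] bound by simp
  ultimately show ?thesis unfolding good_next_def g by blast
qed

lemma inv_step:
  assumes "inv_at i H' ws ph cs" "\<not> goal_done (P' @ Dlm # cs)"
  shows "(\<exists>t. greedy_step S (P' @ Dlm # cs) t) \<and> (\<forall>t. greedy_step S (P' @ Dlm # cs) t \<longrightarrow> good_next i ws ph cs t)"
proof -
  have "ph \<le> 3" using assms by (simp add: inv_at_def)
  then have "ph = 0 \<or> ph = 1 \<or> ph = 2 \<or> ph = 3" by auto
  then show ?thesis
  proof (elim disjE)
    assume "ph = 0" then show ?thesis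
      using step_ph0_nil step_ph0_cons assms(1) by (cases "ws = []") auto
  qed (use step_ph1 step_ph2 step_ph3 assms in auto)
qed

end



context gsetup begin

lemma gen_dec_aux:
  "gen S z out \<Longrightarrow> z = P' @ Dlm # cs \<Longrightarrow> inv_at i H' ws ph cs \<Longrightarrow>
   dec (cs @ out) = map (\<lambda>j. (vs ! j, vals ! j)) [0..<length vs]"
proof (induction z out arbitrary: cs i H' ws ph rule: gen.induct)
  case (stop z)
  then show ?case using inv_done by simp
next
  case (step z t out)
  have "good_next i ws ph cs t" using inv_step[OF step.prems(2)] step.hyps(1,2) step.prems(1) by blast
  then obtain i2 H2 ws2 ph2 where iv: "inv_at i2 H2 ws2 ph2 (cs @ [t])" unfolding good_next_def by blast
  have "dec ((cs @ [t]) @ out) = map (\<lambda>j. (vs ! j, vals ! j)) [0..<length vs]"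
    using step.IH[OF _ iv] step.prems(1) by simp
  then show ?case by simp
qed

lemma gen_exists_aux:
  "meas i ws ph = m \<Longrightarrow> inv_at i H' ws ph cs \<Longrightarrow> \<exists>out. gen S (P' @ Dlm # cs) out"
proof (induction m arbitrary: i H' ws ph cs rule: less_induct)
  case (less m)
  show ?case
  proof (cases "goal_done (P' @ Dlm # cs)")
    case True then show ?thesis using gen.stop by blast
  next
    case False
    from inv_step[OF less.prems(2) False] obtain t where t: "greedy_step S (P' @ Dlm # cs) t"
      and gn: "good_next i ws ph cs t" by blast
    then obtain i2 H2 ws2 ph2 where iv: "inv_at i2 H2 ws2 ph2 (cs @ [t])"
      and lt: "meas i2 ws2 ph2 < meas i ws ph" unfolding good_next_def by blast
    from less.IH[OF _ refl iv] lt less.prems(1) obtain out where "gen S (P' @ Dlm # cs @ [t]) out" by auto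
    then have "gen S ((P' @ Dlm # cs) @ [t]) (out)" by simp
    then show ?thesis using gen.step[OF False t] by blast
  qed
qed

lemma no_inf_aux:
  assumes "inv_at i H' ws ph cs"
  shows "\<not> infinite_run S (P' @ Dlm # cs)"
proof
  assume "infinite_run S (P' @ Dlm # cs)"
  then obtain f where f: "\<And>n. \<not> goal_done ((P' @ Dlm # cs) @ map f [0..<n]) \<and>
      greedy_step S ((P' @ Dlm # cs) @ map f [0..<n]) (f n)" unfolding infinite_run_def by blast
  define m0 where "m0 = meas i ws ph"
  have "\<exists>i2 H2 ws2 ph2. inv_at i2 H2 ws2 ph2 (cs @ map f [0..<n]) \<and> meas i2 ws2 ph2 + n \<le> m0" for n
  proof (induction n)
    case 0 then show ?case using assms m0_def by auto
  next
    case (Suc n)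
    then obtain i2 H2 ws2 ph2 where iv: "inv_at i2 H2 ws2 ph2 (cs @ map f [0..<n])"
      and b: "meas i2 ws2 ph2 + n \<le> m0" by blast
    have "good_next i2 ws2 ph2 (cs @ map f [0..<n]) (f n)"
      using inv_step[OF iv] f[of n] by simp
    then obtain i3 H3 ws3 ph3 where "inv_at i3 H3 ws3 ph3 (cs @ map f [0..<n] @ [f n])"
      and "meas i3 ws3 ph3 < meas i2 ws2 ph2" unfolding good_next_def by auto
    then show ?case using b by (intro exI[of _ i3] exI[of _ H3] exI[of _ ws3] exI[of _ ph3]) simp
  qed
  from this[of "Suc m0"] show False by auto
qed

end



lemma chain_distinct:
  assumes ch: "is_chain S vs" and fin: "finite (chains S)" and ln: "length vs = depth S"
  shows "distinct vs"
proof (rule ccontr)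
  assume "\<not> distinct vs"
  then obtain a b where ab: "a < b" "b < length vs" "vs ! a = vs ! b"
    by (metis distinct_conv_nth linorder_neqE_nat)
  define ws where "ws = take b vs @ drop a vs"
  have lw: "length ws = b + (length vs - a)" using ab by (simp add: ws_def)
  have nth: "ws ! j = vs ! (if j < b then j else a + (j - b))" if "j < length ws" for j
    using that ab by (simp add: ws_def nth_append)
  have E: "\<And>i. Suc i < length vs \<Longrightarrow> (vs ! i, vs ! Suc i) \<in> Es S" using ch by (simp add: is_chain_def)
  have "is_chain S ws"
    unfolding is_chain_def
  proof (intro conjI allI impI)
    show "ws \<noteq> []" using lw ab by auto
    have "set ws \<subseteq> set vs" unfolding ws_def by (auto dest: in_set_takeD in_set_dropD)
    then show "set ws \<subseteq> Vs S" using ch unfolding is_chain_def by blast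
  next
    fix j assume j: "Suc j < length ws"
    show "(ws ! j, ws ! Suc j) \<in> Es S"
    proof (cases "Suc j < b")
      case True then show ?thesis using nth[of j] nth[of "Suc j"] j E[of j] ab by simp
    next
      case False
      show ?thesis
      proof (cases "Suc j = b")
        case True then show ?thesis using nth[of j] nth[of "Suc j"] j E[of j] ab by simp
      next
        case False
        then have "b \<le> j" using \<open>\<not> Suc j < b\<close> by simp
        moreover have "Suc (a + (j - b)) < length vs" using j lw \<open>b \<le> j\<close> by simp
        ultimately show ?thesis using nth[of j] nth[of "Suc j"] j E[of "a + (j - b)"]
          by (simp add: Suc_diff_le)
      qed
    qed
  qed
  then have "length ws \<le> depth S" unfolding depth_def using fin
    by (intro Max_ge) (auto simp: chains_def)
  then show False using lw ab ln by simp
qed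

lemma dec_tail: "dec (concat (map (\<lambda>j. Cm # block (vs ! j) (vals ! j) (css ! j)) js))
   = map (\<lambda>j. (vs ! j, vals ! j)) js"
  by (induction js) (auto simp: block_def dec_Ctx_append)

lemma processed_blocks:
  assumes "length css = length vs"
  shows "processed S vs q css = [Vtx (last vs), Eq, Qu] @
    join_cm (map (\<lambda>j. block (vs ! j) (chain_vals S vs q ! j) (css ! j)) [0..<length vs])"
proof -
  have "map (\<lambda>((v, qv), cs). block v qv cs) (zip (zip vs (chain_vals S vs q)) css)
      = map (\<lambda>j. block (vs ! j) (chain_vals S vs q ! j) (css ! j)) [0..<length vs]"
    using assms by (intro nth_equalityI) (auto simp: chain_vals_length)
  then show ?thesis by (simp add: processed_def)
qed

lemma processed_split:
  fixes S :: "('v, 'c) cstruct" and q :: int and vs :: "'v list" and css :: "'c list list"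
  assumes "length css = length vs" "1 \<le> i" "i < length vs"
  defines "vals \<equiv> chain_vals S vs q"
  shows "processed S vs q css = [Vtx (last vs), Eq, Qu] @
     concat (map (\<lambda>j. block (vs ! j) (vals ! j) (css ! j) @ [Cm]) [0..<i - 1]) @
     map Ctx (css ! (i - 1)) @ [Vtx (vs ! (i - 1)), Eq, Val (vals ! (i - 1)), Cm] @
     map Ctx (css ! i) @ Vtx (vs ! i) # Eq # Val (vals ! i) #
     concat (map (\<lambda>j. Cm # block (vs ! j) (vals ! j) (css ! j)) [Suc i..<length vs])"
proof -
  let ?f = "\<lambda>j. block (vs ! j) (vals ! j) (css ! j)"
  have "join_cm (map ?f [0..<length vs]) = concat (map (\<lambda>j. ?f j @ [Cm]) [0..<i - 1]) @ join_cm (map ?f [i - 1..<length vs])"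
    using assms by (intro join_cm_split) auto
  moreover have "[i - 1..<length vs] = (i - 1) # i # [Suc i..<length vs]"
  proof -
    have "[i - 1..<length vs] = (i - 1) # [Suc (i - 1)..<length vs]" using assms by (simp add: upt_conv_Cons)
    also have "Suc (i - 1) = i" using assms by simp
    also have "[i..<length vs] = i # [Suc i..<length vs]" using assms by (simp add: upt_conv_Cons)
    finally show ?thesis .
  qed
  ultimately show ?thesis using processed_blocks[OF assms(1), of S q]
    by (simp add: join_cm_Cons block_def vals_def comp_def)
qed




lemma part1:
  fixes S :: "('v, 'c) cstruct"
  assumes wf: "wf_struct S" and fin: "finite (chains S)" and d2: "2 \<le> depth S"
    and k: "1 \<le> k" and ts: "test_support S K k inp lab"
  shows "(\<exists>out. gen S inp out) \<and> \<not> infinite_run S inp \<and> (\<forall>out. gen S inp out \<longrightarrow> dec out = dec lab)"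
proof -
  obtain vs shots where ch: "is_chain S vs" and lv: "length vs = depth S" and ls: "length shots = Suc k"
    and vsh: "\<forall>sh \<in> set shots. valid_shot S vs sh"
    and inp: "inp = concat (map (\<lambda>sh. processed S vs (fst sh) (snd sh) @ [Dlm]) (butlast shots))
                  @ take (3 + length (hd (snd (last shots))) + 4) (processed S vs (fst (last shots)) (snd (last shots)))"
    and lab: "lab = drop (3 + length (hd (snd (last shots))) + 4) (processed S vs (fst (last shots)) (snd (last shots)))"
    using ts unfolding test_support_def Let_def by blast
  define q where "q = fst (last shots)"
  define css where "css = snd (last shots)"
  define vals where "vals = chain_vals S vs q"
  define bs where "bs = butlast shots"
  define g where "g = (\<lambda>sh. processed S vs (fst sh) (snd sh) @ [Dlm])"
  define P' where "P' = concat (map g (butlast bs)) @ processed S vs (fst (last bs)) (snd (last bs))"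
  have N2: "2 \<le> length vs" using lv d2 by simp
  have dist: "distinct vs" using chain_distinct[OF ch fin lv] .
  have lbs: "length bs = k" using ls bs_def by simp
  then have bsne: "bs \<noteq> []" using k by auto
  have PP: "concat (map g bs) = P' @ [Dlm]"
  proof -
    have "concat (map g bs) = concat (map g (butlast bs @ [last bs]))" using bsne by simp
    then show ?thesis unfolding P'_def g_def by simp
  qed
  define sh0 where "sh0 = hd bs"
  have sh0in: "sh0 \<in> set shots" unfolding sh0_def bs_def using bsne bs_def
    by (metis hd_in_set in_set_butlastD)
  have v0: "valid_shot S vs sh0" using vsh sh0in by blast
  have l0: "length (snd sh0) = length vs" using v0 by (simp add: valid_shot_def)
  have PP2: "P' @ [Dlm] = processed S vs (fst sh0) (snd sh0) @ Dlm # concat (map g (tl bs))"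
    using PP bsne unfolding sh0_def g_def by (metis (no_types, lifting) append.assoc append_Cons append_Nil concat.simps(2) list.collapse list.simps(9))
  have lastv: "last vs = vs ! (length vs - 1)" using N2 by (intro last_conv_nth) auto
  have vstep: "\<And>j. Suc j < length vs \<Longrightarrow> vals ! Suc j = vals ! j + cst S (vs ! j, vs ! Suc j)"
    unfolding vals_def by (rule chain_vals_Suc)
  have nxt: "next_vtx (vs ! (i - 1)) (P' @ [Dlm]) = Some (Vtx (vs ! i))" if i: "1 \<le> i" "i < length vs" for i
  proof -
    define vals0 where "vals0 = chain_vals S vs (fst sh0)"
    define css0 where "css0 = snd sh0"
    define A where "A = [Vtx (last vs), Eq, Qu] @
     concat (map (\<lambda>j. block (vs ! j) (vals0 ! j) (css0 ! j) @ [Cm]) [0..<i - 1]) @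
     map Ctx (css0 ! (i - 1))"
    define B where "B = [Eq, Val (vals0 ! (i - 1)), Cm] @
     map Ctx (css0 ! i) @ Vtx (vs ! i) # Eq # Val (vals0 ! i) #
     concat (map (\<lambda>j. Cm # block (vs ! j) (vals0 ! j) (css0 ! j)) [Suc i..<length vs]) @ Dlm # concat (map g (tl bs))"
    have "P' @ [Dlm] = A @ Vtx (vs ! (i - 1)) # B"
      unfolding PP2 processed_split[OF l0 i, of S] A_def B_def vals0_def css0_def by simp
    moreover have "Vtx (vs ! (i - 1)) \<notin> set A"
    proof
      assume "Vtx (vs ! (i - 1)) \<in> set A"
      then consider "vs ! (i - 1) = last vs" | j where "j < i - 1" "vs ! (i - 1) = vs ! j"
        unfolding A_def block_def by auto
      then show False
      proof cases
        case 1 then show False using dist i lastv N2 by (simp add: nth_eq_iff_index_eq)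
      next
        case 2 then show False using dist i by (simp add: nth_eq_iff_index_eq)
      qed
    qed
    ultimately have "next_vtx (vs ! (i - 1)) (P' @ [Dlm]) = find is_vtx B" by (simp add: next_vtx_split)
    also have "\<dots> = Some (Vtx (vs ! i))" unfolding B_def by (simp add: is_vtx_def find_Ctx_append)
    finally show ?thesis .
  qed
  interpret gsetup S vs vals P'
    by unfold_locales (use wf N2 dist ch vstep nxt in \<open>auto simp: vals_def chain_vals_length\<close>)
  have lastin: "last shots \<in> set shots" using ls by (metis last_in_set length_0_conv nat.distinct(1))
  have lc: "length css = length vs" using vsh lastin by (simp add: valid_shot_def css_def)
  have hdc: "hd css = css ! 0" using lc N2 by (intro hd_conv_nth) auto
  define REST where "REST = map Ctx (css ! 1) @ Vtx (vs ! 1) # Eq # Val (vals ! 1) #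
     concat (map (\<lambda>j. Cm # block (vs ! j) (vals ! j) (css ! j)) [Suc 1..<length vs])"
  define H' :: "('v, 'c) tok list" where "H' = [Eq, Qu] @ map Ctx (css ! 0)"
  define C0 where "C0 = Vtx (vs ! (length vs - 1)) # H' @ [Vtx (vs ! 0), Eq, Val (vals ! 0), Cm]"
  have lp: "processed S vs q css = C0 @ REST"
    using processed_split[OF lc, of 1 S q] N2 unfolding C0_def H'_def REST_def vals_def lastv by simp
  have lC0: "length C0 = 3 + length (hd css) + 4" unfolding C0_def H'_def hdc by simp
  have inp2: "inp = P' @ Dlm # C0"
    using inp PP lp lC0 unfolding q_def css_def bs_def g_def by simp
  have lab2: "lab = REST" using lab lp lC0 unfolding q_def css_def by simp
  have iv: "inv_at 1 H' [] 0 C0"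
    unfolding inv_at_def C0_def H'_def using N2 by (auto simp add: dec_Ctx_append)
  have R: "map (\<lambda>j. (vs ! j, vals ! j)) [0..<length vs] = (vs ! 0, vals ! 0) # map (\<lambda>j. (vs ! j, vals ! j)) [1..<length vs]"
    using N2 by (subst upt_conv_Cons) auto
  have R1: "map (\<lambda>j. (vs ! j, vals ! j)) [1..<length vs] = (vs ! 1, vals ! 1) # map (\<lambda>j. (vs ! j, vals ! j)) [Suc 1..<length vs]"
    using N2 by (subst upt_conv_Cons) auto
  have declab: "dec lab = map (\<lambda>j. (vs ! j, vals ! j)) [1..<length vs]"
    unfolding lab2 REST_def R1 by (simp add: dec_Ctx_append dec_tail)
  have C0s: "C0 = (Vtx (vs ! (length vs - 1)) # H' @ [Vtx (vs ! 0), Eq, Val (vals ! 0)]) @ Cm # []"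
    unfolding C0_def by simp
  have decC0: "dec (C0 @ out) = (vs ! 0, vals ! 0) # dec out" for out
    unfolding C0s H'_def by (simp only: append.assoc append_Cons dec_Cm_append) (simp add: dec_Ctx_append)
  show ?thesis unfolding inp2
  proof (intro conjI allI impI)
    show "\<exists>out. gen S (P' @ Dlm # C0) out" using gen_exists_aux[OF refl iv] .
    show "\<not> infinite_run S (P' @ Dlm # C0)" using no_inf_aux[OF iv] .
  next
    fix out assume "gen S (P' @ Dlm # C0) out"
    from gen_dec_aux[OF this refl iv] have "dec (C0 @ out) = map (\<lambda>j. (vs ! j, vals ! j)) [0..<length vs]" .
    then show "dec out = dec lab" unfolding decC0 R declab by simp
  qed
qed




theorem lemma2:
  fixes S :: "('v, 'c) cstruct" and K :: nat
  assumes "wf_struct S"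
    and "finite (chains S)"
    and "2 \<le> depth S"
  shows "(\<forall>k inp lab. 1 \<le> k \<longrightarrow> test_support S K k inp lab \<longrightarrow>
            (\<exists>out. gen S inp out) \<and> \<not> infinite_run S inp \<and>
            (\<forall>out. gen S inp out \<longrightarrow> dec out = dec lab))
       \<and> (\<forall>k. 1 \<le> k \<and> k \<le> K - 1 \<longrightarrow>
            (\<forall>(D :: (('v, 'c) tok list \<times> ('v, 'c) tok list) pmf)
               (pr :: ('v, 'c) tok list \<Rightarrow> ('v, 'c) tok list)
               (f :: ('v, 'c) tok list \<Rightarrow> ('v, 'c) tok list).
               set_pmf D \<subseteq> {(i, l). test_support S K k i l} \<longrightarrow>
               (\<forall>(i, l) \<in> set_pmf D. gen S i (pr i)) \<longrightarrow>
               - measure_pmf.prob D {(i, l). dec (pr i) = dec l}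
                 \<le> - measure_pmf.prob D {(i, l). dec (f i) = dec l}))"
proof (intro conjI allI impI)
  fix k inp lab assume "1 \<le> k" "test_support S K k inp lab"
  note p = part1[OF assms this]
  show "\<exists>out. gen S inp out" using p by blast
  show "\<not> infinite_run S inp" using p by blast
  show "\<And>out. gen S inp out \<Longrightarrow> dec out = dec lab" using p by blast
next
  fix k :: nat and D :: "(('v, 'c) tok list \<times> ('v, 'c) tok list) pmf"
    and pr f :: "('v, 'c) tok list \<Rightarrow> ('v, 'c) tok list"
  assume k: "1 \<le> k \<and> k \<le> K - 1" and sub: "set_pmf D \<subseteq> {(i, l). test_support S K k i l}"
    and g: "\<forall>(i, l) \<in> set_pmf D. gen S i (pr i)"
  have all: "x \<in> {(i, l). dec (pr i) = dec l}" if "x \<in> set_pmf D" for x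
  proof -
    obtain i l where x: "x = (i, l)" by (cases x)
    have "test_support S K k i l" using sub that x by auto
    moreover have "gen S i (pr i)" using g that x by auto
    ultimately show ?thesis using part1[OF assms, of k K i l] k x by auto
  qed
  have "measure_pmf.prob D {(i, l). dec (pr i) = dec l} = 1"
    using all by (subst measure_pmf.prob_eq_1) (auto simp: AE_measure_pmf_iff)
  moreover have "measure_pmf.prob D {(i, l). dec (f i) = dec l} \<le> 1" by (rule measure_pmf.prob_le_1)
  ultimately show "- measure_pmf.prob D {(i, l). dec (pr i) = dec l}
                 \<le> - measure_pmf.prob D {(i, l). dec (f i) = dec l}" by simp
qed



end
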